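(* Let $\{X_\gamma\}_{\gamma\in\Gamma}$ be a family of nonzero strictly convex real Banach spaces and let $Z$ denote either $Z_0=\bigoplus^{c_0}_{\gamma\in\Gamma}X_\gamma$ or $Z_\infty=\bigoplus^{\ell_\infty}_{\gamma\in\Gamma}X_\gamma$. Let $\gamma_0\in\Gamma$ and $x_{\gamma_0}\in S_{X_{\gamma_0}}$. Then $A(\gamma_0,x_{\gamma_0})=\{z\in S_Z: z(\gamma_0)=x_{\gamma_0}\}$ is a maximal norm-closed proper face of $B_Z$, equivalently, a maximal convex subset of $S_Z$.
   Context: All Banach spaces are real. $Z_\infty$ is the space of families $z=(z(\gamma))_{\gamma\in\Gamma}$, $z(\gamma)\in X_\gamma$, with $\|z\|=\sup_\gamma\|z(\gamma)\|<\infty$; $Z_0$ is its closed subspace of families with $\{\gamma:\|z(\gamma)\|>\varepsilon\}$ finite for all $\varepsilon>0$. A Banach space is strictly convex if every point of its unit sphere is an extreme point of its closed unit ball. *)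

theory Defs
  imports "HOL-Analysis.Analysis" "HOL-Library.Function_Algebras"
begin

text \<open>Pointwise real vector space structure on families z :: 'g => 'b,
  so that the library notions convex, open_segment, face_of apply to
  subsets of the product space.\<close>

instantiation "fun" :: (type, real_vector) real_vector
begin
definition scaleR_fun :: "real \<Rightarrow> ('a \<Rightarrow> 'b) \<Rightarrow> 'a \<Rightarrow> 'b"
  where "scaleR_fun r f = (\<lambda>x. r *\<^sub>R f x)"
instance
  by standard (simp_all add: scaleR_fun_def fun_eq_iff scaleR_add_right scaleR_add_left)
end

definition supn :: "('g \<Rightarrow> 'b::real_normed_vector) \<Rightarrow> real"
  where "supn z = (SUP g. norm (z g))"

text \<open>The l_infinity-sum Z_infinity and the c_0-sum Z_0 of the spaces X g
  (each X g a closed linear subspace of the ambient Banach space 'b).\<close>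
definition Zinf :: "('g \<Rightarrow> 'b::real_normed_vector set) \<Rightarrow> ('g \<Rightarrow> 'b) set"
  where "Zinf X = {z. (\<forall>g. z g \<in> X g) \<and> bdd_above (range (\<lambda>g. norm (z g)))}"

definition Z0 :: "('g \<Rightarrow> 'b::real_normed_vector set) \<Rightarrow> ('g \<Rightarrow> 'b) set"
  where "Z0 X = {z. (\<forall>g. z g \<in> X g) \<and> (\<forall>e>0. finite {g. norm (z g) > e})}"

definition unit_ball_Z :: "('g \<Rightarrow> 'b::real_normed_vector) set \<Rightarrow> ('g \<Rightarrow> 'b) set"
  where "unit_ball_Z Z = {z \<in> Z. supn z \<le> 1}"

definition unit_sphere_Z :: "('g \<Rightarrow> 'b::real_normed_vector) set \<Rightarrow> ('g \<Rightarrow> 'b) set"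
  where "unit_sphere_Z Z = {z \<in> Z. supn z = 1}"

definition norm_closed_in :: "('g \<Rightarrow> 'b::real_normed_vector) set \<Rightarrow> ('g \<Rightarrow> 'b) set \<Rightarrow> bool"
  where "norm_closed_in Z F \<longleftrightarrow> F \<subseteq> Z \<and>
     (\<forall>s z. (\<forall>n. s n \<in> F) \<longrightarrow> z \<in> Z \<longrightarrow> (\<lambda>n. supn (s n - z)) \<longlonglongrightarrow> 0 \<longrightarrow> z \<in> F)"

definition strictly_convex_sub :: "'b::real_normed_vector set \<Rightarrow> bool"
  where "strictly_convex_sub X \<longleftrightarrow>
     (\<forall>x\<in>X. norm x = 1 \<longrightarrow> x extreme_point_of {y \<in> X. norm y \<le> 1})"

definition max_closed_proper_face :: "('g \<Rightarrow> 'b::real_normed_vector) set \<Rightarrow> ('g \<Rightarrow> 'b) set \<Rightarrow> ('g \<Rightarrow> 'b) set \<Rightarrow> bool"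
  where "max_closed_proper_face Z B F \<longleftrightarrow>
     F face_of B \<and> norm_closed_in Z F \<and> F \<noteq> {} \<and> F \<noteq> B \<and>
     (\<forall>G. G face_of B \<and> norm_closed_in Z G \<and> G \<noteq> {} \<and> G \<noteq> B \<and> F \<subseteq> G \<longrightarrow> G = F)"

definition max_convex_subset :: "('a::real_vector) set \<Rightarrow> 'a set \<Rightarrow> bool"
  where "max_convex_subset S F \<longleftrightarrow> convex F \<and> F \<subseteq> S \<and>
     (\<forall>C. convex C \<and> C \<subseteq> S \<and> F \<subseteq> C \<longrightarrow> C = F)"

end

theory Submission
  imports Defs
begin

lemma Z_bdd:
  assumes "Z = Z0 X \<or> Z = Zinf X" "z \<in> Z"
  shows "bdd_above (range (\<lambda>g. norm (z g)))"
  using assms(1)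
proof
  assume Z: "Z = Z0 X"
  let ?F = "{g. norm (z g) > 1}"
  have "finite ?F" using assms(2) Z by (auto simp: Z0_def)
  have "range (\<lambda>g. norm (z g)) \<subseteq> (\<lambda>g. norm (z g)) ` ?F \<union> {..1}" by force
  moreover have "bdd_above ((\<lambda>g. norm (z g)) ` ?F \<union> {..1})"
    using \<open>finite ?F\<close> by simp
  ultimately show ?thesis by (meson bdd_above_mono)
next
  assume "Z = Zinf X" then show ?thesis using assms(2) by (auto simp: Zinf_def)
qed

lemma supn_upper:
  assumes "bdd_above (range (\<lambda>g. norm (z g)))"
  shows "norm (z g) \<le> supn z"
  unfolding supn_def using assms by (auto intro: cSUP_upper)

lemma supn_least:
  assumes "\<And>g. norm (z g) \<le> c"
  shows "supn z \<le> c"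
  unfolding supn_def using assms by (intro cSUP_least) auto

lemma Z_lin:
  assumes subsp: "\<And>g. subspace (X g)" and Zd: "Z = Z0 X \<or> Z = Zinf X"
    and z: "z \<in> Z" and w: "w \<in> Z"
  shows "a *\<^sub>R z + b *\<^sub>R w \<in> Z"
proof -
  have ev: "\<And>g. (a *\<^sub>R z + b *\<^sub>R w) g = a *\<^sub>R z g + b *\<^sub>R w g"
    by (simp add: scaleR_fun_def)
  have mem: "\<forall>g. (a *\<^sub>R z + b *\<^sub>R w) g \<in> X g"
  proof
    fix g
    have "z g \<in> X g" "w g \<in> X g" using z w Zd by (auto simp: Z0_def Zinf_def)
    then show "(a *\<^sub>R z + b *\<^sub>R w) g \<in> X g" unfolding ev
      by (intro subspace_add subspace_scale subsp)
  qed
  have tri: "\<And>g. norm ((a *\<^sub>R z + b *\<^sub>R w) g) \<le> \<bar>a\<bar> * norm (z g) + \<bar>b\<bar> * norm (w g)"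
    unfolding ev by (metis norm_scaleR norm_triangle_ineq order_trans order_refl)
  show ?thesis using Zd
  proof
    assume Z: "Z = Z0 X"
    have "finite {g. norm ((a *\<^sub>R z + b *\<^sub>R w) g) > e}" if e: "e > 0" for e
    proof -
      define d where "d = e / (\<bar>a\<bar> + \<bar>b\<bar> + 1)"
      have dpos: "d > 0" using e by (simp add: d_def add_pos_nonneg)
      have ed: "(\<bar>a\<bar> + \<bar>b\<bar>) * d < e"
      proof -
        have "(\<bar>a\<bar> + \<bar>b\<bar>) * d < (\<bar>a\<bar> + \<bar>b\<bar> + 1) * d" using dpos by simp
        also have "\<dots> = e" unfolding d_def by (simp add: add_pos_nonneg)
        finally show ?thesis .
      qed
      have "{g. norm ((a *\<^sub>R z + b *\<^sub>R w) g) > e} \<subseteq> {g. norm (z g) > d} \<union> {g. norm (w g) > d}"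
      proof (rule subsetI, rule ccontr)
        fix g assume g: "g \<in> {g. norm ((a *\<^sub>R z + b *\<^sub>R w) g) > e}"
          and n: "g \<notin> {g. norm (z g) > d} \<union> {g. norm (w g) > d}"
        have "\<bar>a\<bar> * norm (z g) \<le> \<bar>a\<bar> * d" using n by (intro mult_left_mono) auto
        moreover have "\<bar>b\<bar> * norm (w g) \<le> \<bar>b\<bar> * d" using n by (intro mult_left_mono) auto
        ultimately show False using tri[of g] g ed by (simp add: distrib_right)
      qed
      moreover have "finite {g. norm (z g) > d}" "finite {g. norm (w g) > d}"
        using z w Z dpos by (auto simp: Z0_def)
      ultimately show ?thesis by (meson finite_Un finite_subset)
    qed
    then show ?thesis using mem Z by (simp add: Z0_def)
  next
    assume Z: "Z = Zinf X"
    obtain M1 where M1: "\<And>g. norm (z g) \<le> M1" using z Z by (auto simp: Zinf_def bdd_above_def)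
    obtain M2 where M2: "\<And>g. norm (w g) \<le> M2" using w Z by (auto simp: Zinf_def bdd_above_def)
    have "norm ((a *\<^sub>R z + b *\<^sub>R w) g) \<le> \<bar>a\<bar> * M1 + \<bar>b\<bar> * M2" for g
      using tri[of g] mult_left_mono[OF M1[of g], of "\<bar>a\<bar>"] mult_left_mono[OF M2[of g], of "\<bar>b\<bar>"]
      by simp
    then have "bdd_above (range (\<lambda>g. norm ((a *\<^sub>R z + b *\<^sub>R w) g)))"
      by (auto simp: bdd_above_def)
    then show ?thesis using mem Z by (simp add: Zinf_def)
  qed
qed

lemma Z_upd:
  assumes Zd: "Z = Z0 X \<or> Z = Zinf X"
    and z: "z \<in> Z" and v: "v \<in> X g0"
  shows "z(g0 := v) \<in> Z"
  using Zd
proof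
  assume Z: "Z = Z0 X"
  have "finite {g. norm ((z(g0 := v)) g) > e}" if "e > 0" for e
  proof -
    have "{g. norm ((z(g0 := v)) g) > e} \<subseteq> insert g0 {g. norm (z g) > e}" by auto
    moreover have "finite {g. norm (z g) > e}" using z Z that by (auto simp: Z0_def)
    ultimately show ?thesis by (meson finite_insert finite_subset)
  qed
  then show ?thesis using z v Z by (auto simp: Z0_def)
next
  assume Z: "Z = Zinf X"
  obtain M1 where M1: "\<And>g. norm (z g) \<le> M1" using z Z by (auto simp: Zinf_def bdd_above_def)
  have "norm ((z(g0 := v)) g) \<le> max M1 (norm v)" for g using M1[of g] by auto
  then have "bdd_above (range (\<lambda>g. norm ((z(g0 := v)) g)))" by (meson bdd_aboveI2)
  then show ?thesis using z v Z by (auto simp: Zinf_def)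
qed

theorem lemma2p7:
  fixes X :: "'g \<Rightarrow> 'b::banach set"
    and Z :: "('g \<Rightarrow> 'b) set"
    and g0 :: 'g and x0 :: 'b
  assumes subsp: "\<And>g. subspace (X g)"
    and cl: "\<And>g. closed (X g)"
    and nonzero: "\<And>g. X g \<noteq> {0}"
    and sc: "\<And>g. strictly_convex_sub (X g)"
    and Zdef: "Z = Z0 X \<or> Z = Zinf X"
    and x0: "x0 \<in> X g0" "norm x0 = 1"
  shows "max_closed_proper_face Z (unit_ball_Z Z) {z \<in> unit_sphere_Z Z. z g0 = x0}
       \<and> max_convex_subset (unit_sphere_Z Z) {z \<in> unit_sphere_Z Z. z g0 = x0}"
proof -
  define S where "S = unit_sphere_Z Z"
  define B where "B = unit_ball_Z Z"
  define A where "A = {z \<in> S. z g0 = x0}"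
  have bdd: "\<And>z. z \<in> Z \<Longrightarrow> bdd_above (range (\<lambda>g. norm (z g)))"
    by (rule Z_bdd[OF Zdef])
  have upper: "\<And>z g. z \<in> Z \<Longrightarrow> norm (z g) \<le> supn z" by (rule supn_upper, rule bdd)
  have XZ: "\<And>z g. z \<in> Z \<Longrightarrow> z g \<in> X g" using Zdef by (auto simp: Z0_def Zinf_def)
  have lin: "\<And>z w a b. z \<in> Z \<Longrightarrow> w \<in> Z \<Longrightarrow> a *\<^sub>R z + b *\<^sub>R w \<in> Z"
    using Z_lin[OF subsp Zdef] by blast
  have ev: "\<And>z w a b g. (a *\<^sub>R z + b *\<^sub>R w) g = a *\<^sub>R z g + b *\<^sub>R w (g::'g)"
    for z w :: "'g \<Rightarrow> 'b" by (simp add: scaleR_fun_def)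
  have ballB: "norm (z g) \<le> 1" if "z \<in> B" for z g
  proof -
    have "z \<in> Z" "supn z \<le> 1" using that by (auto simp: B_def unit_ball_Z_def)
    then show ?thesis using upper[of z g] by linarith
  qed
  have inB: "z \<in> B" if "z \<in> Z" "\<And>g. norm (z g) \<le> 1" for z
    using that supn_least[of z 1] by (simp add: B_def unit_ball_Z_def)
  have ext: "x0 extreme_point_of {y \<in> X g0. norm y \<le> 1}"
    using sc x0 unfolding strictly_convex_sub_def by blast
  have sc0: "a = x0 \<and> b = x0"
    if h: "a \<in> X g0" "b \<in> X g0" "norm a \<le> 1" "norm b \<le> 1" "0 < u" "u < 1"
      "x0 = (1 - u) *\<^sub>R a + u *\<^sub>R b" for a b u
  proof -
    have "a = b"
    proof (rule ccontr)
      assume "a \<noteq> b"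
      then have "x0 \<in> open_segment a b" using h unfolding in_segment by blast
      then show False using ext h by (auto simp: extreme_point_of_def)
    qed
    then have "x0 = ((1 - u) + u) *\<^sub>R a" using h(7) by (simp only: scaleR_add_left)
    then show ?thesis using \<open>a = b\<close> by simp
  qed
  have sc1: "norm ((1/2) *\<^sub>R x0 + (1/2) *\<^sub>R w0) < 1"
    if h: "w0 \<in> X g0" "norm w0 \<le> 1" "w0 \<noteq> x0" for w0
  proof -
    let ?m = "(1/2) *\<^sub>R x0 + (1/2) *\<^sub>R w0"
    have mX: "?m \<in> X g0" using subsp x0 h by (intro subspace_add subspace_scale) auto
    have "norm ?m \<le> (1/2) * norm x0 + (1/2) * norm w0"
      using norm_triangle_ineq[of "(1/2) *\<^sub>R x0" "(1/2) *\<^sub>R w0"] by simp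
    then have le: "norm ?m \<le> 1" using x0 h by simp
    have "?m \<in> open_segment x0 w0" unfolding in_segment using h
      by (intro conjI exI[of _ "1/2"]) auto
    then have "\<not> (?m extreme_point_of {y \<in> X g0. norm y \<le> 1})"
      using x0 h by (auto simp: extreme_point_of_def)
    then have "norm ?m \<noteq> 1" using sc mX unfolding strictly_convex_sub_def by blast
    then show ?thesis using le by simp
  qed
  have SB: "S \<subseteq> B" unfolding S_def B_def unit_sphere_Z_def unit_ball_Z_def by auto
  have AB: "A \<subseteq> B" using SB unfolding A_def by auto
  have A_char: "z \<in> A" if "z \<in> B" "z g0 = x0" for z
  proof -
    have "z \<in> Z" "supn z \<le> 1" using that unfolding B_def unit_ball_Z_def by auto
    moreover have "1 \<le> supn z" using upper[OF \<open>z \<in> Z\<close>, of g0] that x0 by simp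
    ultimately show ?thesis using that unfolding A_def S_def unit_sphere_Z_def by auto
  qed
  have BZ: "\<And>z. z \<in> B \<Longrightarrow> z \<in> Z" unfolding B_def unit_ball_Z_def by auto
  have convB: "u *\<^sub>R z + v *\<^sub>R w \<in> B"
    if "z \<in> B" "w \<in> B" "0 \<le> u" "0 \<le> v" "u + v = 1" for z w u v
  proof (rule inB)
    show "u *\<^sub>R z + v *\<^sub>R w \<in> Z" using lin BZ that by blast
    fix g
    have "norm ((u *\<^sub>R z + v *\<^sub>R w) g) \<le> u * norm (z g) + v * norm (w g)"
      unfolding ev using norm_triangle_ineq[of "u *\<^sub>R z g" "v *\<^sub>R w g"] that by simp
    also have "\<dots> \<le> u * 1 + v * 1"
      using ballB that by (intro add_mono mult_left_mono) auto
    finally show "norm ((u *\<^sub>R z + v *\<^sub>R w) g) \<le> 1" using that by simp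
  qed
  have convA: "convex A"
    unfolding convex_def
  proof (intro ballI allI impI)
    fix z w u v assume h: "z \<in> A" "w \<in> A" "0 \<le> (u::real)" "0 \<le> (v::real)" "u + v = 1"
    have "u *\<^sub>R z + v *\<^sub>R w \<in> B" using convB h AB by blast
    moreover have "(u *\<^sub>R z + v *\<^sub>R w) g0 = x0" unfolding ev using h
      by (simp add: A_def flip: scaleR_add_left)
    ultimately show "u *\<^sub>R z + v *\<^sub>R w \<in> A" by (rule A_char)
  qed
  have Z0: "(\<lambda>_. 0) \<in> Z" using Zdef subspace_0[OF subsp] by (auto simp: Z0_def Zinf_def)
  have zB: "(\<lambda>_. 0) \<in> B" using inB[OF Z0] by simp
  have zA: "(\<lambda>_. 0) \<notin> A" using x0 unfolding A_def by auto
  have Ane: "A \<noteq> {}"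
  proof -
    have "(\<lambda>_. 0)(g0 := x0) \<in> Z" using Z_upd[OF Zdef Z0 x0(1)] .
    then have "(\<lambda>_. 0)(g0 := x0) \<in> B" using x0 by (intro inB) auto
    then have "(\<lambda>_. 0)(g0 := x0) \<in> A" by (intro A_char) auto
    then show ?thesis by blast
  qed
  have key: "\<exists>z\<in>A. (1/2) *\<^sub>R z + (1/2) *\<^sub>R w \<in> Z \<and> supn ((1/2) *\<^sub>R z + (1/2) *\<^sub>R w) < 1"
    if w: "w \<in> B" "w g0 \<noteq> x0" for w
  proof -
    define z where "z = ((-1) *\<^sub>R w + 0 *\<^sub>R w)(g0 := x0)"
    have zZ: "z \<in> Z" unfolding z_def
      by (rule Z_upd[OF Zdef _ x0(1)], rule lin) (use BZ w in auto)
    have zg: "z g = (if g = g0 then x0 else - w g)" for g unfolding z_def by (simp add: ev)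
    have "z \<in> B" using zZ by (rule inB) (use zg ballB w x0 in auto)
    then have zA: "z \<in> A" by (rule A_char) (simp add: zg)
    let ?m = "(1/2) *\<^sub>R z + (1/2) *\<^sub>R w"
    have mZ: "?m \<in> Z" using zZ BZ w lin by blast
    have mg: "?m g = (if g = g0 then (1/2) *\<^sub>R x0 + (1/2) *\<^sub>R w g0 else 0)" for g
      unfolding ev zg by simp
    have "supn ?m \<le> norm ((1/2) *\<^sub>R x0 + (1/2) *\<^sub>R w g0)"
      by (rule supn_least, subst mg) simp
    also have "\<dots> < 1" using sc1[of "w g0", OF XZ[OF BZ[OF w(1)]] ballB[OF w(1)] w(2)] .
    finally show ?thesis using zA mZ by blast
  qed
  have interior: "B \<subseteq> G" if G: "G face_of B" "m \<in> G" "supn m < 1" for G m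
  proof
    fix b assume b: "b \<in> B"
    show "b \<in> G"
    proof (cases "b = m")
      case True then show ?thesis using G by simp
    next
      case False
      have mB: "m \<in> B" using G face_of_imp_subset by blast
      define s where "s = supn m"
      have s0: "0 \<le> s" unfolding s_def using upper[OF BZ[OF mB], of g0] norm_ge_zero[of "m g0"] by linarith
      define t where "t = (1 - s) / (1 + s)"
      have t0: "0 < t" unfolding t_def using s0 G(3) s_def by simp
      have s1: "1 + s \<noteq> 0" using s0 by linarith
      have ts: "(1 + t) * s + t = 1"
      proof -
        have tt: "t * (1 + s) = 1 - s" unfolding t_def using s1 by simp
        have "(1 + t) * s + t = s + t * (1 + s)" by (simp add: algebra_simps)
        then show ?thesis using tt by simp
      qed
      define c where "c = (1 + t) *\<^sub>R m + (- t) *\<^sub>R b"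
      have cB: "c \<in> B"
      proof (rule inB)
        show "c \<in> Z" unfolding c_def using lin BZ mB b by blast
        fix g
        have "norm (c g) \<le> (1 + t) * norm (m g) + t * norm (b g)"
          unfolding c_def ev using norm_triangle_ineq[of "(1 + t) *\<^sub>R m g" "(- t) *\<^sub>R b g"] t0
          by simp
        also have "\<dots> \<le> (1 + t) * s + t * 1"
          using upper[of m g] BZ mB ballB[OF b, of g] t0 s_def
          by (intro add_mono mult_left_mono) auto
        finally show "norm (c g) \<le> 1" using ts by simp
      qed
      define u where "u = t / (1 + t)"
      have u: "0 < u" "u < 1" unfolding u_def using t0 by auto
      have "(1 - u) *\<^sub>R c + u *\<^sub>R b = m"
      proof -
        have "1 - u = 1 / (1 + t)" unfolding u_def using t0 by (simp add: field_simps)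
        then have "(1 - u) *\<^sub>R c = m + (- u) *\<^sub>R b"
        proof -
          have t1: "1 + t \<noteq> 0" using t0 by linarith
          have r1: "(1 - u) * (1 + t) = 1" unfolding u_def using t1 by (simp add: field_simps)
          have r3: "(1 - u) * (- t) = - u" unfolding u_def using t1 by (simp add: field_simps)
          show ?thesis unfolding c_def scaleR_add_right scaleR_scaleR r1 r3 by simp
        qed
        then show ?thesis by simp
      qed
      moreover have "c \<noteq> b"
      proof
        assume "c = b"
        then have "(1 + t) *\<^sub>R m = (1 + t) *\<^sub>R b" unfolding c_def by (simp add: algebra_simps)
        then show False using False t0 by simp
      qed
      ultimately have "m \<in> open_segment c b" unfolding in_segment using u by blast
      then show ?thesis using G cB b unfolding face_of_def by blast
    qed
  qed
  have faceA: "A face_of B"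
    unfolding face_of_def
  proof (intro conjI ballI impI)
    show "A \<subseteq> B" "convex A" by (fact AB, fact convA)
    fix a b x assume h: "a \<in> B" "b \<in> B" "x \<in> A" "x \<in> open_segment a b"
    then obtain u where u: "0 < u" "u < 1" "x = (1 - u) *\<^sub>R a + u *\<^sub>R b"
      unfolding in_segment by blast
    have "x0 = (1 - u) *\<^sub>R a g0 + u *\<^sub>R b g0" using u h unfolding A_def by (simp add: scaleR_fun_def)
    then have "a g0 = x0 \<and> b g0 = x0"
      using sc0[OF XZ[OF BZ[OF h(1)]] XZ[OF BZ[OF h(2)]] ballB[OF h(1)] ballB[OF h(2)] u(1,2)] by blast
    then show "a \<in> A" "b \<in> A" using A_char h by auto
  qed
  have closedA: "norm_closed_in Z A"
    unfolding norm_closed_in_def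
  proof (intro conjI allI impI)
    show "A \<subseteq> Z" using AB BZ by blast
    fix s z assume s: "\<forall>n. s n \<in> A" and z: "z \<in> Z" and lim: "(\<lambda>n. supn (s n - z)) \<longlonglongrightarrow> 0"
    have dZ: "s n - z \<in> Z" for n
    proof -
      have "s n \<in> B" using s AB by blast
      then have "1 *\<^sub>R s n + (-1) *\<^sub>R z \<in> Z" using lin[OF BZ z] by blast
      then show ?thesis by simp
    qed
    have dle: "norm (s n g - z g) \<le> supn (s n - z)" for n g
      using upper[OF dZ[of n], of g] by simp
    have "norm (x0 - z g0) \<le> 0"
    proof (rule LIMSEQ_le_const[OF lim])
      show "\<exists>N. \<forall>n\<ge>N. norm (x0 - z g0) \<le> supn (s n - z)"
      proof (intro exI allI impI)
        fix n :: nat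
        have "s n g0 = x0" using s unfolding A_def by blast
        then show "norm (x0 - z g0) \<le> supn (s n - z)" using dle[of n g0] by simp
      qed
    qed
    then have zg0: "z g0 = x0" by simp
    have "norm (z g) \<le> 1" for g
    proof -
      have lim1: "(\<lambda>n. 1 + supn (s n - z)) \<longlonglongrightarrow> 1 + 0"
        by (intro tendsto_add tendsto_const lim)
      have "norm (z g) \<le> 1 + 0"
      proof (rule LIMSEQ_le_const[OF lim1])
        show "\<exists>N. \<forall>n\<ge>N. norm (z g) \<le> 1 + supn (s n - z)"
        proof (intro exI allI impI)
          fix n
          have "norm (z g) \<le> norm (s n g) + norm (s n g - z g)"
            using norm_triangle_ineq4[of "s n g" "s n g - z g"] by simp
          also have "\<dots> \<le> 1 + supn (s n - z)"
          proof (rule add_mono)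
            have "s n \<in> B" using s AB by blast
            then show "norm (s n g) \<le> 1" by (rule ballB)
            show "norm (s n g - z g) \<le> supn (s n - z)" by (rule dle)
          qed
          finally show "norm (z g) \<le> 1 + supn (s n - z)" .
        qed
      qed
      then show ?thesis by simp
    qed
    then have "z \<in> B" using z by (intro inB)
    then show "z \<in> A" using zg0 by (rule A_char)
  qed
  have maxface: "G = A" if G: "G face_of B" "G \<noteq> B" "A \<subseteq> G" for G
  proof
    show "A \<subseteq> G" by fact
    show "G \<subseteq> A"
    proof
      fix w assume wG: "w \<in> G"
      show "w \<in> A"
      proof (rule ccontr)
        assume wA: "w \<notin> A"
        have wB: "w \<in> B" using wG G face_of_imp_subset by blast
        then have "w g0 \<noteq> x0" using A_char wA by blast
        then obtain z where z: "z \<in> A" and m: "supn ((1/2) *\<^sub>R z + (1/2) *\<^sub>R w) < 1"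
          using key wB by blast
        have "(1/2) *\<^sub>R z + (1/2) *\<^sub>R w \<in> G"
          using face_of_imp_convex[OF G(1)] z G(3) wG by (intro convexD) auto
        then have "B \<subseteq> G" using interior G m by blast
        then show False using G face_of_imp_subset by blast
      qed
    qed
  qed
  have maxconv: "C = A" if C: "convex C" "C \<subseteq> S" "A \<subseteq> C" for C
  proof
    show "A \<subseteq> C" by fact
    show "C \<subseteq> A"
    proof
      fix w assume wC: "w \<in> C"
      show "w \<in> A"
      proof (rule ccontr)
        assume wA: "w \<notin> A"
        have wB: "w \<in> B" using wC C SB by blast
        then have "w g0 \<noteq> x0" using A_char wA by blast
        then obtain z where z: "z \<in> A" and m: "supn ((1/2) *\<^sub>R z + (1/2) *\<^sub>R w) < 1"
          using key wB by blast
        have "(1/2) *\<^sub>R z + (1/2) *\<^sub>R w \<in> C"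
          using C z wC by (intro convexD) auto
        then have "(1/2) *\<^sub>R z + (1/2) *\<^sub>R w \<in> S" using C by blast
        then show False using m unfolding S_def unit_sphere_Z_def by simp
      qed
    qed
  qed
  have AS: "A \<subseteq> S" unfolding A_def by auto
  have "max_closed_proper_face Z B A"
    unfolding max_closed_proper_face_def
    using faceA closedA Ane zB zA maxface by blast
  moreover have "max_convex_subset S A"
    unfolding max_convex_subset_def using convA AS maxconv by blast
  ultimately show ?thesis unfolding A_def S_def B_def by blast
qed

end
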